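(* Let $X$ be a Lorentzian pre-length space with timelike curvature bounded above by $0$ globally. Then $X$ is Ptolemaic, i.e. for all $x\le y\le z\le w$ in $X$, $$\ell(x,z)\,\ell(y,w)\ \ge\ \ell(x,y)\,\ell(z,w)+\ell(x,w)\,\ell(y,z).$$
   Context: A Lorentzian pre-length space $(X,d,\ll,\le,\ell)$: $(X,d)$ a metric space, $\le$ reflexive and transitive, $\ll$ transitive and contained in $\le$, $\ell:X\times X\to[0,\infty]$ with $\ell(x,z)\ge\ell(x,y)+\ell(y,z)$ whenever $x\le y\le z$, and $\ell(x,y)>0$ iff $x\ll y$. Maximising geodesic from $x\le y$: a curve $\gamma$ from $x$ to $y$, monotone for $\le$, with $\ell(\gamma(s),\gamma(u))=\ell(\gamma(s),\gamma(t))+\ell(\gamma(t),\gamma(u))$ for $s\le t\le u$. Timelike curvature bounded above by $0$ globally: (i) $\ell$ is finite and continuous on $X\times X$; (ii) any $x\ll y$ are joined by a maximising geodesic; (iii) for every timelike triangle $\Delta(x,y,z)$ ($x\ll y\ll z$ with maximising geodesics as sides) and any points $p,q$ on its sides, $\ell(p,q)\ge\ell(\bar p,\bar q)$, where $\bar p,\bar q$ are the corresponding points (same $\ell$-distances from the endpoints of their side) on a triangle in the Minkowski plane $\mathbb R^{1,1}$ with the same side lengths. *)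

theory Defs
  imports "HOL-Analysis.Analysis"
begin

text \<open>A Lorentzian pre-length space on the metric space given by the type 'a
  (the metric d is dist): causal relation le, timelike relation ll,
  time separation function lt with values in [0,\<infinity>].\<close>

definition lorentzian_pre_length_space ::
  "('a::metric_space \<Rightarrow> 'a \<Rightarrow> bool) \<Rightarrow> ('a \<Rightarrow> 'a \<Rightarrow> bool) \<Rightarrow> ('a \<Rightarrow> 'a \<Rightarrow> ennreal) \<Rightarrow> bool" where
  "lorentzian_pre_length_space le ll lt \<longleftrightarrow>
     (\<forall>x. le x x) \<and>
     (\<forall>x y z. le x y \<longrightarrow> le y z \<longrightarrow> le x z) \<and>
     (\<forall>x y z. ll x y \<longrightarrow> ll y z \<longrightarrow> ll x z) \<and>
     (\<forall>x y. ll x y \<longrightarrow> le x y) \<and>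
     (\<forall>x y z. le x y \<longrightarrow> le y z \<longrightarrow> lt x y + lt y z \<le> lt x z) \<and>
     (\<forall>x y. 0 < lt x y \<longleftrightarrow> ll x y)"

definition max_geodesic ::
  "('a::metric_space \<Rightarrow> 'a \<Rightarrow> bool) \<Rightarrow> ('a \<Rightarrow> 'a \<Rightarrow> ennreal) \<Rightarrow> (real \<Rightarrow> 'a) \<Rightarrow> 'a \<Rightarrow> 'a \<Rightarrow> bool" where
  "max_geodesic le lt \<gamma> x y \<longleftrightarrow>
     le x y \<and> continuous_on {0..1} \<gamma> \<and> \<gamma> 0 = x \<and> \<gamma> 1 = y \<and>
     (\<forall>s t. 0 \<le> s \<longrightarrow> s \<le> t \<longrightarrow> t \<le> 1 \<longrightarrow> le (\<gamma> s) (\<gamma> t)) \<and>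
     (\<forall>s t u. 0 \<le> s \<longrightarrow> s \<le> t \<longrightarrow> t \<le> u \<longrightarrow> u \<le> 1 \<longrightarrow>
        lt (\<gamma> s) (\<gamma> u) = lt (\<gamma> s) (\<gamma> t) + lt (\<gamma> t) (\<gamma> u))"

definition mink_tau :: "real \<times> real \<Rightarrow> real \<times> real \<Rightarrow> real" where
  "mink_tau p q = (let dt = fst q - fst p; ds = snd q - snd p in
     if \<bar>ds\<bar> \<le> dt then sqrt (dt\<^sup>2 - ds\<^sup>2) else 0)"

definition corr_point ::
  "('a \<Rightarrow> 'a \<Rightarrow> ennreal) \<Rightarrow> 'a \<Rightarrow> 'a \<Rightarrow> (real \<Rightarrow> 'a) \<Rightarrow> real \<times> real \<Rightarrow> real \<times> real
     \<Rightarrow> 'a \<Rightarrow> real \<times> real \<Rightarrow> bool" where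
  "corr_point lt a b \<sigma> ab bb p pb \<longleftrightarrow>
     p \<in> \<sigma> ` {0..1} \<and> pb \<in> closed_segment ab bb \<and>
     ennreal (mink_tau ab pb) = lt a p \<and> ennreal (mink_tau pb bb) = lt p b"

definition timelike_triangle ::
  "('a::metric_space \<Rightarrow> 'a \<Rightarrow> bool) \<Rightarrow> ('a \<Rightarrow> 'a \<Rightarrow> bool) \<Rightarrow> ('a \<Rightarrow> 'a \<Rightarrow> ennreal)
    \<Rightarrow> 'a \<Rightarrow> 'a \<Rightarrow> 'a \<Rightarrow> (real \<Rightarrow> 'a) \<Rightarrow> (real \<Rightarrow> 'a) \<Rightarrow> (real \<Rightarrow> 'a) \<Rightarrow> bool" where
  "timelike_triangle le ll lt x y z \<alpha> \<beta> \<gamma> \<longleftrightarrow>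
     ll x y \<and> ll y z \<and>
     max_geodesic le lt \<alpha> x y \<and> max_geodesic le lt \<beta> y z \<and> max_geodesic le lt \<gamma> x z"

definition tl_curv_bounded_above_0 ::
  "('a::metric_space \<Rightarrow> 'a \<Rightarrow> bool) \<Rightarrow> ('a \<Rightarrow> 'a \<Rightarrow> bool) \<Rightarrow> ('a \<Rightarrow> 'a \<Rightarrow> ennreal) \<Rightarrow> bool" where
  "tl_curv_bounded_above_0 le ll lt \<longleftrightarrow>
     (\<forall>x y. lt x y \<noteq> \<infinity>) \<and>
     continuous_on UNIV (\<lambda>q. lt (fst q) (snd q)) \<and>
     (\<forall>x y. ll x y \<longrightarrow> (\<exists>\<gamma>. max_geodesic le lt \<gamma> x y)) \<and>
     (\<forall>x y z \<alpha> \<beta> \<gamma> xb yb zb.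
        timelike_triangle le ll lt x y z \<alpha> \<beta> \<gamma> \<longrightarrow>
        ennreal (mink_tau xb yb) = lt x y \<longrightarrow>
        ennreal (mink_tau yb zb) = lt y z \<longrightarrow>
        ennreal (mink_tau xb zb) = lt x z \<longrightarrow>
        (let S = {(p, pb). corr_point lt x y \<alpha> xb yb p pb \<or>
                           corr_point lt y z \<beta> yb zb p pb \<or>
                           corr_point lt x z \<gamma> xb zb p pb}
         in \<forall>(p, pb)\<in>S. \<forall>(q, qb)\<in>S. ennreal (mink_tau pb qb) \<le> lt p q))"

end

theory Submission
  imports Defs
begin

lemma bad_case:
  fixes L be q ga r a b d e :: real
  assumes h: "0 \<le> be" "be \<le> q" "0 \<le> ga" "ga \<le> r" "q \<le> L" "0 < L"
    and bd: "b = sqrt (be*q)" "d = sqrt (ga*r)" "a = sqrt ((L-be)*(L-q))" "e = sqrt ((L+ga)*(L+r))"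
    and bad: "be*r \<le> q*ga" and ea: "a + b + d \<le> e"
  shows "a*d + e*b \<le> L*(b+d)"
proof -
  have b0: "b \<ge> 0" "b^2 = be*q" using h unfolding bd by auto
  have d0: "d \<ge> 0" "d^2 = ga*r" using h unfolding bd by auto
  have a0: "a \<ge> 0" "a^2 = (L-be)*(L-q)" using h unfolding bd by auto
  have e0: "e \<ge> 0" "e^2 = (L+ga)*(L+r)" using h unfolding bd by auto
  have i1: "(d*(be+q))^2 - (b*(ga+r))^2 = (q*ga - be*r)*(q*r - be*ga)"
    unfolding power_mult_distrib b0(2) d0(2) by (simp add: power2_eq_square algebra_simps)
  have "q*r - be*ga \<ge> 0" using h by (simp add: mult_mono)
  hence "(b*(ga+r))^2 \<le> (d*(be+q))^2" using i1 bad
    by (metis diff_ge_0_iff_ge mult_nonneg_nonneg)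
  hence i1': "b*(ga+r) \<le> d*(be+q)"
    by (rule power2_le_imp_le) (use b0(1) d0(1) h in simp)
  have i2: "L^2*(b+d) + b*d*(b+d) - d*a^2 - b*e^2 = L*(d*(be+q) - b*(ga+r))"
  proof -
    have "L^2*(b+d) + b*d*(b+d) - d*a^2 - b*e^2 = L^2*(b+d) + d*b^2 + b*d^2 - d*a^2 - b*e^2"
      by (simp add: power2_eq_square algebra_simps)
    also have "... = L*(d*(be+q) - b*(ga+r))"
      unfolding a0(2) e0(2) b0(2) d0(2) by (simp add: power2_eq_square algebra_simps)
    finally show ?thesis .
  qed
  have i2': "L^2*(b+d) + b*d*(b+d) - d*a^2 - b*e^2 \<ge> 0" unfolding i2 using i1' h(6) by simp
  have i3: "(b+d)*(d*a^2 + b*e^2) - b*d*(b+d)^2 - (a*d+e*b)^2 = b*d*((e-a)^2 - (b+d)^2)"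
    by (simp add: power2_eq_square algebra_simps)
  have "(b+d)^2 \<le> (e-a)^2" using ea b0(1) d0(1) by (intro power_mono) auto
  hence "b*d*((e-a)^2 - (b+d)^2) \<ge> 0" using b0(1) d0(1) by simp
  hence i3': "(a*d+e*b)^2 \<le> (b+d)*(d*a^2 + b*e^2) - b*d*(b+d)^2"
    using i3 by linarith
  have "(b+d)*(L^2*(b+d) + b*d*(b+d) - d*a^2 - b*e^2) \<ge> 0" using i2' b0(1) d0(1) by simp
  hence "(b+d)*(d*a^2 + b*e^2) - b*d*(b+d)^2 \<le> (L*(b+d))^2"
    by (simp add: power2_eq_square algebra_simps)
  hence "(a*d+e*b)^2 \<le> (L*(b+d))^2" using i3' by linarith
  thus ?thesis by (rule power2_le_imp_le) (use h(6) b0(1) d0(1) in simp)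
qed

lemma amgm_sqrt: fixes m n :: real assumes "0 \<le> m" "0 \<le> n" shows "2 * sqrt (m*n) \<le> m + n"
proof -
  have "0 \<le> (sqrt m - sqrt n)^2" by simp
  also have "... = m + n - 2 * sqrt (m*n)" using assms
    by (simp add: power2_eq_square algebra_simps real_sqrt_mult)
  finally show ?thesis by simp
qed

lemma good_case:
  fixes L al pp be q ga r :: real
  assumes h: "0 \<le> al" "0 \<le> pp" "0 \<le> be" "0 \<le> q" "0 \<le> ga" "0 \<le> r"
    and L: "L = al + be" "L = pp + q"
  shows "sqrt (al*pp) * sqrt (ga*r) + sqrt ((L+ga)*(L+r)) * sqrt (be*q)
           \<le> L * sqrt ((be+ga)*(q+r))"
proof -
  define X where "X = al*ga"
  define Y where "Y = be*(L+ga)"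
  define Z where "Z = pp*r"
  define W where "W = q*(L+r)"
  have L0: "L \<ge> 0" using h L by simp
  have nn: "X \<ge> 0" "Y \<ge> 0" "Z \<ge> 0" "W \<ge> 0" unfolding X_def Y_def Z_def W_def using h L0 by auto
  have e1: "L^2 * ((be+ga)*(q+r)) = (X+Y)*(Z+W)"
  proof -
    have "L^2 * ((be+ga)*(q+r)) = (L*(be+ga))*(L*(q+r))" by (simp add: power2_eq_square algebra_simps)
    also have "L*(be+ga) = X + Y" unfolding X_def Y_def using L(1) by (simp add: algebra_simps)
    also have "L*(q+r) = Z + W" unfolding Z_def W_def using L(2) by (simp add: algebra_simps)
    finally show ?thesis .
  qed
  have e2: "sqrt (al*pp) * sqrt (ga*r) = sqrt (X*Z)" unfolding X_def Z_def
    by (simp add: real_sqrt_mult[symmetric] algebra_simps)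
  have e3: "sqrt ((L+ga)*(L+r)) * sqrt (be*q) = sqrt (Y*W)" unfolding Y_def W_def
    by (simp add: real_sqrt_mult[symmetric] algebra_simps)
  have "(sqrt (X*Z) + sqrt (Y*W))^2 = X*Z + Y*W + 2 * sqrt ((X*W)*(Y*Z))"
    using nn by (simp add: power2_eq_square algebra_simps real_sqrt_mult[symmetric])
  also have "... \<le> X*Z + Y*W + (X*W + Y*Z)" using amgm_sqrt[of "X*W" "Y*Z"] nn by simp
  also have "... = (L * sqrt ((be+ga)*(q+r)))^2"
    using e1 h by (simp add: power_mult_distrib algebra_simps)
  finally have "(sqrt (X*Z) + sqrt (Y*W))^2 \<le> (L * sqrt ((be+ga)*(q+r)))^2" .
  hence "sqrt (X*Z) + sqrt (Y*W) \<le> L * sqrt ((be+ga)*(q+r))"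
    by (rule power2_le_imp_le) (use L0 h in simp)
  thus ?thesis using e2 e3 by simp
qed

lemma ptolemy_real:
  fixes L u1 v1 u2 v2 T :: real
  assumes o: "0 \<le> v1" "v1 \<le> u1" "u1 < L" "L \<le> u2" "u2 \<le> v2"
    and H: "\<And>s. u1 < s \<Longrightarrow> s \<le> L \<Longrightarrow>
              sqrt ((s-u1)*(s-v1)) + sqrt ((u2-s)*(v2-s)) \<le> T"
    and Tb: "sqrt ((L-u1)*(L-v1)) + sqrt ((u2-L)*(v2-L)) \<le> T"
    and ea: "sqrt (u1* v1) + sqrt ((L-u1)*(L-v1)) + sqrt ((u2-L)*(v2-L)) \<le> sqrt (u2* v2)"
  shows "sqrt (u1* v1) * sqrt ((u2-L)*(v2-L)) + sqrt (u2* v2) * sqrt ((L-u1)*(L-v1)) \<le> L*T"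
proof -
  define F where "F s = sqrt ((s-u1)*(s-v1)) + sqrt ((u2-s)*(v2-s))" for s
  have H0: "F s \<le> T" if "u1 \<le> s" "s \<le> L" for s
  proof (cases "u1 < s")
    case True thus ?thesis using H that unfolding F_def by auto
  next
    case False
    hence s: "s = u1" using that by simp
    define sn where "sn n = u1 + (L-u1) * inverse (real (Suc n))" for n
    have "sn \<longlonglongrightarrow> u1 + (L-u1) * 0" unfolding sn_def
      by (intro tendsto_intros LIMSEQ_inverse_real_of_nat)
    hence sn: "sn \<longlonglongrightarrow> u1" by simp
    have "isCont F u1" unfolding F_def by (intro continuous_intros)
    hence "(\<lambda>n. F (sn n)) \<longlonglongrightarrow> F u1" using sn isCont_tendsto_compose by blast
    moreover have "F (sn n) \<le> T" for n
    proof -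
      have i: "0 < inverse (real (Suc n))" "inverse (real (Suc n)) \<le> 1" by (auto simp: inverse_le_1_iff)
      have "u1 < sn n" unfolding sn_def using o i by simp
      moreover have "sn n \<le> L"
      proof -
        have "(L-u1) * inverse (real (Suc n)) \<le> (L-u1) * 1" using o i by (intro mult_left_mono) auto
        thus ?thesis unfolding sn_def by simp
      qed
      ultimately show ?thesis using H unfolding F_def by auto
    qed
    ultimately show ?thesis unfolding s by (intro LIMSEQ_le_const2) auto
  qed
  define be q ga r where "be = L - u1" and "q = L - v1" and "ga = u2 - L" and "r = v2 - L"
  have nn: "0 \<le> be" "be \<le> q" "0 \<le> ga" "ga \<le> r" "q \<le> L" "0 < L"
    unfolding be_def q_def ga_def r_def using o by auto
  have u1e: "u1 = L - be" and v1e: "v1 = L - q" and u2e: "u2 = L + ga" and v2e: "v2 = L + r"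
    unfolding be_def q_def ga_def r_def by auto
  show ?thesis
  proof (cases "be*r \<le> q*ga")
    case True
    have "sqrt (u1* v1) * sqrt ((u2-L)*(v2-L)) + sqrt (u2* v2) * sqrt ((L-u1)*(L-v1))
       \<le> L * (sqrt ((L-u1)*(L-v1)) + sqrt ((u2-L)*(v2-L)))"
      using bad_case[OF nn _ _ _ _ True, of "sqrt ((L-u1)*(L-v1))" "sqrt ((u2-L)*(v2-L))"
          "sqrt (u1* v1)" "sqrt (u2* v2)"] ea
      unfolding u1e v1e u2e v2e by simp
    also have "... \<le> L*T" using Tb nn(6) by simp
    finally show ?thesis .
  next
    case False
    hence good: "q*ga \<le> be*r" by simp
    define D where "D = (q - be) + (r - ga)"
    define lam where "lam = (q - be) / D"
    have D0: "D \<ge> 0" unfolding D_def using nn by simp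
    have lam0: "0 \<le> lam" "lam \<le> 1" unfolding lam_def D_def using nn
      by (auto simp: divide_le_eq_1 intro!: divide_nonneg_nonneg)
    have lamD: "lam * D = q - be"
    proof (cases "D = 0")
      case True thus ?thesis unfolding lam_def using nn D_def by simp
    next
      case False thus ?thesis unfolding lam_def by simp
    qed
    define s where "s = u1 + lam*(be+ga)"
    have s1: "s - u1 = lam*(be+ga)" unfolding s_def by simp
    have s2: "s - v1 = lam*(q+r)"
      unfolding s_def u1e v1e using lamD unfolding D_def by (simp add: algebra_simps)
    have s3: "u2 - s = (1-lam)*(be+ga)" unfolding s_def u1e u2e by (simp add: algebra_simps)
    have s4: "v2 - s = (1-lam)*(q+r)" using s2 unfolding v1e v2e by (simp add: algebra_simps)
    have sL: "s \<le> L"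
    proof -
      have "lam*(be+ga)*D = (be+ga)*(lam*D)" by (simp add: algebra_simps)
      hence "lam*(be+ga)*D = (be+ga)*(q-be)" using lamD by simp
      moreover have "be*D - (be+ga)*(q-be) = be*r - q*ga" unfolding D_def by (simp add: algebra_simps)
      ultimately have "lam*(be+ga)*D \<le> be*D" using good by linarith
      hence "lam*(be+ga) \<le> be" if "D > 0" using that by simp
      moreover have "lam*(be+ga) \<le> be" if "D = 0" using that unfolding lam_def using nn by simp
      ultimately have "lam*(be+ga) \<le> be" using D0 by linarith
      thus ?thesis unfolding s_def u1e by simp
    qed
    have su: "u1 \<le> s" unfolding s_def using lam0 nn by simp
    have "F s = lam * sqrt ((be+ga)*(q+r)) + (1-lam) * sqrt ((be+ga)*(q+r))"
    proof -
      have "(s-u1)*(s-v1) = lam^2 * ((be+ga)*(q+r))" unfolding s1 s2 by (simp add: power2_eq_square algebra_simps)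
      hence a1: "sqrt ((s-u1)*(s-v1)) = lam * sqrt ((be+ga)*(q+r))"
        using lam0 by (simp add: real_sqrt_mult)
      have "(u2-s)*(v2-s) = (1-lam)^2 * ((be+ga)*(q+r))" unfolding s3 s4 by (simp add: power2_eq_square algebra_simps)
      hence a2: "sqrt ((u2-s)*(v2-s)) = (1-lam) * sqrt ((be+ga)*(q+r))"
        using lam0 by (simp add: real_sqrt_mult)
      show ?thesis unfolding F_def a1 a2 ..
    qed
    hence Fs: "F s = sqrt ((be+ga)*(q+r))" by (simp add: algebra_simps)
    have "sqrt (u1* v1) * sqrt ((u2-L)*(v2-L)) + sqrt (u2* v2) * sqrt ((L-u1)*(L-v1))
        \<le> L * sqrt ((be+ga)*(q+r))"
      using good_case[of u1 v1 be q ga r L] nn o unfolding u1e v1e u2e v2e by simp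
    also have "... \<le> L * T" using H0[OF su sL] Fs nn(6) by simp
    finally show ?thesis .
  qed
qed

definition nc :: "real \<Rightarrow> real \<Rightarrow> real \<times> real" where
  "nc u v = ((u + v) / 2, (u - v) / 2)"

lemma mt_nc: "mink_tau (nc u v) (nc u' v') =
   (if u \<le> u' \<and> v \<le> v' then sqrt ((u' - u) * (v' - v)) else 0)"
proof -
  have e: "((u' + v') / 2 - (u + v) / 2)^2 - ((u' - v') / 2 - (u - v) / 2)^2 = (u' - u) * (v' - v)"
    by (simp add: power2_eq_square field_simps)
  have c: "(\<bar>(u' - v') / 2 - (u - v) / 2\<bar> \<le> (u' + v') / 2 - (u + v) / 2) \<longleftrightarrow> (u \<le> u' \<and> v \<le> v')"
    unfolding abs_le_iff by (auto simp: field_simps)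
  show ?thesis unfolding mink_tau_def nc_def Let_def fst_conv snd_conv c e by simp
qed

lemma mt_self: "mink_tau p p = 0"
  unfolding mink_tau_def Let_def by simp

lemma nc_seg: assumes "0 \<le> s" "s \<le> L" "0 < L" shows "nc s s \<in> closed_segment (nc 0 0) (nc L L)"
proof -
  have "nc s s = (1 - s/L) *\<^sub>R nc 0 0 + (s/L) *\<^sub>R nc L L" using assms unfolding nc_def by simp
  moreover have "0 \<le> s/L" "s/L \<le> 1" using assms by auto
  ultimately show ?thesis unfolding closed_segment_def by blast
qed

lemma quad_roots: fixes S P :: real assumes "4 * P \<le> S^2"
  shows "\<exists>u v. v \<le> u \<and> u + v = S \<and> u * v = P"
proof -
  define D where "D = S^2 - 4 * P"
  have D: "D \<ge> 0" unfolding D_def using assms by simp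
  define u v where "u = (S + sqrt D)/2" and "v = (S - sqrt D)/2"
  have "v \<le> u" unfolding u_def v_def using D by simp
  moreover have "u + v = S" unfolding u_def v_def by (simp add: field_simps)
  moreover have "u * v = (S^2 - (sqrt D)^2)/4" unfolding u_def v_def by (simp add: power2_eq_square algebra_simps)
  hence "u * v = P" using D unfolding D_def by simp
  ultimately show ?thesis by blast
qed

lemma place1: fixes a b L :: real assumes "0 < a" "0 < b" "a + b \<le> L"
  shows "\<exists>u v. 0 \<le> v \<and> v \<le> u \<and> u < L \<and> u * v = a^2 \<and> (L - u) * (L - v) = b^2"
proof -
  define S where "S = (L^2 + a^2 - b^2) / L"
  have L0: "L > 0" using assms by simp
  have "(2*a)^2 \<le> S^2"
  proof -
    have "2*a*L \<le> L^2 + a^2 - b^2"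
    proof -
      have "b^2 \<le> (L-a)^2" using assms by (intro power_mono) auto
      thus ?thesis by (simp add: power2_eq_square algebra_simps)
    qed
    hence "2*a \<le> S" unfolding S_def using L0 by (simp add: le_divide_eq)
    thus ?thesis using assms by (intro power_mono) auto
  qed
  then obtain u v where uv: "v \<le> u" "u + v = S" "u * v = a^2"
    using quad_roots[of "a^2" S] by (auto simp: power2_eq_square)
  have SL: "L * S = L^2 + a^2 - b^2" unfolding S_def using L0 by (simp add: power2_eq_square)
  have p2: "(L - u) * (L - v) = b^2"
  proof -
    have "(L - u) * (L - v) = L^2 - L * (u + v) + u * v" by (simp add: power2_eq_square algebra_simps)
    thus ?thesis using uv SL by simp
  qed
  have Spos: "S > 0"
  proof -
    have "L^2 + a^2 - b^2 > 0"
    proof -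
      have "b^2 < L^2" using assms by (intro power_strict_mono) auto
      moreover have "0 \<le> a^2" by simp
      ultimately show ?thesis by linarith
    qed
    thus ?thesis unfolding S_def using L0 by simp
  qed
  have v0: "v \<ge> 0"
  proof (rule ccontr)
    assume "\<not> v \<ge> 0"
    hence "v < 0" by simp
    moreover have "u > 0" using uv Spos \<open>v < 0\<close> by linarith
    ultimately have "u * v < 0" by (simp add: mult_pos_neg)
    thus False using uv assms by simp
  qed
  have "2 * L - S > 0"
  proof -
    have "L * (2 * L - S) = L^2 - a^2 + b^2" using SL by (simp add: power2_eq_square algebra_simps)
    moreover have "a^2 < L^2" using assms by (intro power_strict_mono) auto
    ultimately have "L * (2 * L - S) > 0" by (simp add: add_pos_nonneg)
    thus ?thesis using L0 by (simp add: zero_less_mult_iff)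
  qed
  have uL: "u < L"
  proof (rule ccontr)
    assume "\<not> u < L"
    hence "L - u \<le> 0" by simp
    moreover have "L - v > 0" using \<open>2 * L - S > 0\<close> uv \<open>L - u \<le> 0\<close> by linarith
    ultimately have "(L - u) * (L - v) \<le> 0" by (simp add: mult_nonpos_nonneg)
    thus False using p2 assms by simp
  qed
  show ?thesis using uv v0 uL p2 by blast
qed

lemma place2: fixes d e L :: real assumes "0 < d" "0 < L" "L + d \<le> e"
  shows "\<exists>u v. L \<le> u \<and> u \<le> v \<and> u * v = e^2 \<and> (u - L) * (v - L) = d^2"
proof -
  define S where "S = (e^2 + L^2 - d^2) / L"
  have e0: "e > 0" using assms by simp
  have "(2*e)^2 \<le> S^2"
  proof -
    have "2*e*L \<le> e^2 + L^2 - d^2"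
    proof -
      have "d^2 \<le> (e-L)^2" using assms by (intro power_mono) auto
      thus ?thesis by (simp add: power2_eq_square algebra_simps)
    qed
    hence "2*e \<le> S" unfolding S_def using assms by (simp add: le_divide_eq)
    thus ?thesis using e0 by (intro power_mono) auto
  qed
  then obtain v u where uv: "u \<le> v" "v + u = S" "v * u = e^2"
    using quad_roots[of "e^2" S] by (auto simp: power2_eq_square)
  have SL: "L * S = e^2 + L^2 - d^2" unfolding S_def using assms by (simp add: power2_eq_square)
  have p2: "(u - L) * (v - L) = d^2"
  proof -
    have "(u - L) * (v - L) = L^2 - L * (v + u) + v * u" by (simp add: power2_eq_square algebra_simps)
    thus ?thesis using uv SL by simp
  qed
  have "S - 2 * L > 0"
  proof -
    have "L * (S - 2 * L) = e^2 - L^2 - d^2" using SL by (simp add: power2_eq_square algebra_simps)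
    moreover have "(L + d)^2 \<le> e^2" using assms by (intro power_mono) auto
    moreover have "(L + d)^2 = L^2 + d^2 + 2*L*d" by (simp add: power2_eq_square algebra_simps)
    moreover have "2*L*d > 0" using assms by simp
    ultimately have "L * (S - 2 * L) > 0" by linarith
    thus ?thesis using assms by (simp add: zero_less_mult_iff)
  qed
  have uL: "L \<le> u"
  proof (rule ccontr)
    assume "\<not> L \<le> u"
    hence "u - L < 0" by simp
    moreover have "v - L > 0" using \<open>S - 2 * L > 0\<close> uv \<open>u - L < 0\<close> by linarith
    ultimately have "(u - L) * (v - L) < 0" by (simp add: mult_neg_pos)
    thus False using p2 by simp
  qed
  show ?thesis using uv uL p2 by (auto simp: mult.commute)
qed

definition tau :: "('a \<Rightarrow> 'a \<Rightarrow> ennreal) \<Rightarrow> 'a \<Rightarrow> 'a \<Rightarrow> real" where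
  "tau lt x y = enn2real (lt x y)"

context
  fixes le ll :: "'a::metric_space \<Rightarrow> 'a \<Rightarrow> bool" and lt :: "'a \<Rightarrow> 'a \<Rightarrow> ennreal"
  assumes LP: "lorentzian_pre_length_space le ll lt"
    and CB: "tl_curv_bounded_above_0 le ll lt"
begin

lemma fin: "lt x y < top"
  using CB unfolding tl_curv_bounded_above_0_def by (simp add: top.not_eq_extremum)

lemma lt_eq: "lt x y = ennreal (tau lt x y)"
  unfolding tau_def using fin by simp

lemma tau_nn: "0 \<le> tau lt x y" unfolding tau_def by simp

lemma le_refl': "le x x" using LP unfolding lorentzian_pre_length_space_def by blast
lemma le_trans': "le x y \<Longrightarrow> le y z \<Longrightarrow> le x z"
  using LP unfolding lorentzian_pre_length_space_def by blast
lemma ll_le: "ll x y \<Longrightarrow> le x y"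
  using LP unfolding lorentzian_pre_length_space_def by blast

lemma rev_tri: assumes "le x y" "le y z" shows "tau lt x y + tau lt y z \<le> tau lt x z"
proof -
  have "lt x y + lt y z \<le> lt x z" using LP assms unfolding lorentzian_pre_length_space_def by blast
  hence "ennreal (tau lt x y) + ennreal (tau lt y z) \<le> ennreal (tau lt x z)"
    by (simp only: lt_eq[of x y] lt_eq[of y z] lt_eq[of x z])
  hence "ennreal (tau lt x y + tau lt y z) \<le> ennreal (tau lt x z)"
    using ennreal_plus[OF tau_nn tau_nn, of x y y z] by simp
  thus ?thesis by (rule ennreal_le_iff[THEN iffD1, OF tau_nn])
qed

lemma ll_iff: "ll x y \<longleftrightarrow> 0 < tau lt x y"
proof -
  have "0 < lt x y \<longleftrightarrow> ll x y" using LP unfolding lorentzian_pre_length_space_def by blast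
  thus ?thesis by (simp add: lt_eq[of x y])
qed

lemma tau_self: "tau lt x x = 0"
  using rev_tri[OF le_refl' le_refl', of x] tau_nn[of x x] by simp

lemma tau_cont: "continuous_on UNIV (\<lambda>q. tau lt (fst q) (snd q))"
proof -
  have c: "continuous_on UNIV (\<lambda>q. lt (fst q) (snd q))"
    using CB unfolding tl_curv_bounded_above_0_def by blast
  show ?thesis unfolding continuous_on_def tau_def
  proof
    fix q :: "'a \<times> 'a" assume "q \<in> UNIV"
    have "((\<lambda>q. lt (fst q) (snd q)) \<longlongrightarrow> ennreal (tau lt (fst q) (snd q))) (at q within UNIV)"
      using c unfolding continuous_on_def lt_eq[of "fst q" "snd q", symmetric] by blast
    hence "((\<lambda>q. enn2real (lt (fst q) (snd q))) \<longlongrightarrow> tau lt (fst q) (snd q)) (at q within UNIV)"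
      using tau_nn by (intro tendsto_enn2real) auto
    thus "((\<lambda>q. enn2real (lt (fst q) (snd q))) \<longlongrightarrow> enn2real (lt (fst q) (snd q))) (at q within UNIV)"
      unfolding tau_def .
  qed
qed

lemma geo_exists: "ll x y \<Longrightarrow> \<exists>g. max_geodesic le lt g x y"
  using CB unfolding tl_curv_bounded_above_0_def by blast

lemma geo_add: assumes "max_geodesic le lt g x y" "0 \<le> s" "s \<le> t" "t \<le> u" "u \<le> 1"
  shows "tau lt (g s) (g u) = tau lt (g s) (g t) + tau lt (g t) (g u)"
proof -
  have "lt (g s) (g u) = lt (g s) (g t) + lt (g t) (g u)"
    using assms unfolding max_geodesic_def by blast
  hence "ennreal (tau lt (g s) (g u)) = ennreal (tau lt (g s) (g t)) + ennreal (tau lt (g t) (g u))"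
    by (simp only: lt_eq)
  hence "ennreal (tau lt (g s) (g u)) = ennreal (tau lt (g s) (g t) + tau lt (g t) (g u))"
    using ennreal_plus[OF tau_nn tau_nn, of "g s" "g t" "g t" "g u"] by simp
  thus ?thesis by (metis ennreal_inj tau_nn add_nonneg_nonneg)
qed

lemma geo_ends: "max_geodesic le lt g x y \<Longrightarrow> g 0 = x \<and> g 1 = y"
  unfolding max_geodesic_def by blast

lemma geo_le: assumes "max_geodesic le lt g x y" "0 \<le> s" "s \<le> t" "t \<le> 1"
  shows "le (g s) (g t)"
  using assms unfolding max_geodesic_def by blast

lemma geo_split: assumes "max_geodesic le lt g x y" "0 \<le> t" "t \<le> 1"
  shows "tau lt x (g t) + tau lt (g t) y = tau lt x y"
  using geo_add[OF assms(1), of 0 t 1] assms geo_ends[OF assms(1)] by simp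

lemma geo_ivt: assumes "max_geodesic le lt g x y" "0 \<le> c" "c \<le> tau lt x y"
  shows "\<exists>t. 0 \<le> t \<and> t \<le> 1 \<and> tau lt x (g t) = c"
proof -
  have gc: "continuous_on {0..1} g" using assms unfolding max_geodesic_def by blast
  have "continuous_on {0..1} (\<lambda>t. (x, g t))" by (intro continuous_intros gc)
  hence "continuous_on {0..1} (\<lambda>t. tau lt (fst (x, g t)) (snd (x, g t)))"
    by (rule continuous_on_compose2[OF tau_cont]) auto
  hence co: "continuous_on {0..1} (\<lambda>t. tau lt x (g t))" by simp
  have "tau lt x (g 0) \<le> c" "c \<le> tau lt x (g 1)"
    using geo_ends[OF assms(1)] assms tau_self by auto
  from IVT'[of "\<lambda>t. tau lt x (g t)", OF this _ co] show ?thesis by auto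
qed

lemma cmp:
  assumes tri: "timelike_triangle le ll lt x y z al be ga"
    and m: "mink_tau xb yb = tau lt x y" "mink_tau yb zb = tau lt y z" "mink_tau xb zb = tau lt x z"
    and P: "corr_point lt x y al xb yb p pb \<or> corr_point lt y z be yb zb p pb \<or> corr_point lt x z ga xb zb p pb"
    and Q: "corr_point lt x y al xb yb q qb \<or> corr_point lt y z be yb zb q qb \<or> corr_point lt x z ga xb zb q qb"
  shows "mink_tau pb qb \<le> tau lt p q"
proof -
  have m': "ennreal (mink_tau xb yb) = lt x y" "ennreal (mink_tau yb zb) = lt y z"
    "ennreal (mink_tau xb zb) = lt x z" using m by (simp_all add: lt_eq)
  note H0 = CB[unfolded tl_curv_bounded_above_0_def, THEN conjunct2, THEN conjunct2, THEN conjunct2,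
     rule_format, OF tri m', unfolded Let_def]
  have "ennreal (mink_tau pb qb) \<le> lt p q"
  proof -
    let ?S = "{(p, pb). corr_point lt x y al xb yb p pb \<or> corr_point lt y z be yb zb p pb \<or> corr_point lt x z ga xb zb p pb}"
    have i1: "(p,pb) \<in> ?S" using P by simp
    have i2: "(q,qb) \<in> ?S" using Q by simp
    have "case (p,pb) of (p, pb) \<Rightarrow> \<forall>(q, qb)\<in>?S. ennreal (mink_tau pb qb) \<le> lt p q"
      by (rule bspec[OF H0 i1])
    hence "\<forall>(q, qb)\<in>?S. ennreal (mink_tau pb qb) \<le> lt p q" by simp
    from bspec[OF this i2] show ?thesis by simp
  qed
  thus ?thesis using tau_nn by (simp add: lt_eq[of p q])
qed

lemma corrI: assumes "p \<in> g ` {0..1}" "pb \<in> closed_segment ab bb"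
  "mink_tau ab pb = tau lt a p" "mink_tau pb bb = tau lt p b"
  shows "corr_point lt a b g ab bb p pb"
  using assms unfolding corr_point_def by (simp add: lt_eq)

lemma corr_end: assumes "max_geodesic le lt g a b" "mink_tau ab bb = tau lt a b"
  shows "corr_point lt a b g ab bb b bb"
proof (rule corrI)
  show "b \<in> g ` {0..1}" using geo_ends[OF assms(1)] by force
  show "bb \<in> closed_segment ab bb" by simp
  show "mink_tau ab bb = tau lt a b" by fact
  show "mink_tau bb bb = tau lt b b" by (simp add: mt_self tau_self)
qed


lemma ll_trans': "ll x y \<Longrightarrow> ll y z \<Longrightarrow> ll x z"
  using LP unfolding lorentzian_pre_length_space_def by blast

lemma core:
  assumes xy: "ll x y" and yz: "ll y z" and zw: "ll z w"
  shows "tau lt x y * tau lt z w + tau lt x w * tau lt y z \<le> tau lt x z * tau lt y w"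
proof -
  define a b L d e T where "a = tau lt x y" and "b = tau lt y z" and "L = tau lt x z"
    and "d = tau lt z w" and "e = tau lt x w" and "T = tau lt y w"
  have xz: "ll x z" using ll_trans' xy yz by blast
  have xw: "ll x w" using ll_trans' xz zw by blast
  obtain al where al: "max_geodesic le lt al x y" using geo_exists xy by blast
  obtain be where be: "max_geodesic le lt be y z" using geo_exists yz by blast
  obtain ga where ga: "max_geodesic le lt ga x z" using geo_exists xz by blast
  obtain de where de: "max_geodesic le lt de z w" using geo_exists zw by blast
  obtain ep where ep: "max_geodesic le lt ep x w" using geo_exists xw by blast
  have tri1: "timelike_triangle le ll lt x y z al be ga"
    unfolding timelike_triangle_def using xy yz al be ga by blast
  have tri2: "timelike_triangle le ll lt x z w ga de ep"
    unfolding timelike_triangle_def using xz zw ga de ep by blast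
  have a0: "a > 0" unfolding a_def using xy ll_iff by blast
  have b0: "b > 0" unfolding b_def using yz ll_iff by blast
  have d0: "d > 0" unfolding d_def using zw ll_iff by blast
  have Lab: "a + b \<le> L" unfolding a_def b_def L_def using rev_tri ll_le xy yz by blast
  have L0: "L > 0" using Lab a0 b0 by simp
  have Tbd: "b + d \<le> T" unfolding T_def b_def d_def using rev_tri ll_le yz zw by blast
  have eLd: "L + d \<le> e" unfolding L_def d_def e_def using rev_tri ll_le xz zw by blast
  have eaT: "a + T \<le> e" unfolding a_def T_def e_def
    using rev_tri ll_le xy ll_trans' yz zw by blast
  obtain u1 v1 where uv1: "0 \<le> v1" "v1 \<le> u1" "u1 < L" "u1 * v1 = a^2" "(L - u1) * (L - v1) = b^2"
    using place1[OF a0 b0 Lab] by blast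
  obtain u2 v2 where uv2: "L \<le> u2" "u2 \<le> v2" "u2 * v2 = e^2" "(u2 - L) * (v2 - L) = d^2"
    using place2[OF d0 L0 eLd] by blast
  have sa: "sqrt (u1 * v1) = a" using uv1 a0 by simp
  have sb: "sqrt ((L - u1) * (L - v1)) = b" using uv1 b0 by simp
  have se: "sqrt (u2 * v2) = e" using uv2 eLd L0 d0 by simp
  have sd: "sqrt ((u2 - L) * (v2 - L)) = d" using uv2 d0 by simp
  define xb yb zb wb where "xb = nc 0 0" and "yb = nc u1 v1" and "zb = nc L L" and "wb = nc u2 v2"
  have m1: "mink_tau xb yb = tau lt x y" unfolding xb_def yb_def mt_nc using uv1 sa a_def by simp
  have m2: "mink_tau yb zb = tau lt y z" unfolding zb_def yb_def mt_nc using uv1 sb b_def by simp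
  have m3: "mink_tau xb zb = tau lt x z" unfolding xb_def zb_def mt_nc using L0 L_def by simp
  have m4: "mink_tau xb wb = tau lt x w" unfolding xb_def wb_def mt_nc using uv2 L0 se e_def by simp
  have m5: "mink_tau zb wb = tau lt z w" unfolding zb_def wb_def mt_nc using uv2 sd d_def by simp
  have cy: "corr_point lt x y al xb yb y yb" by (rule corr_end[OF al m1])
  have cw: "corr_point lt z w de zb wb w wb" by (rule corr_end[OF de m5])
  have H: "sqrt ((s - u1) * (s - v1)) + sqrt ((u2 - s) * (v2 - s)) \<le> T" if s: "u1 < s" "s \<le> L" for s
  proof -
    have s0: "0 \<le> s" "s \<le> tau lt x z" using s uv1 L_def by auto
    obtain t where t: "0 \<le> t" "t \<le> 1" "tau lt x (ga t) = s" using geo_ivt[OF ga s0] by blast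
    define p where "p = ga t"
    have tpz: "tau lt p z = L - s" using geo_split[OF ga t(1,2)] t(3) unfolding p_def L_def by simp
    have cp: "corr_point lt x z ga xb zb p (nc s s)"
    proof (rule corrI)
      show "p \<in> ga ` {0..1}" unfolding p_def using t by auto
      show "nc s s \<in> closed_segment xb zb" unfolding xb_def zb_def using nc_seg s0 s L0 by simp
      show "mink_tau xb (nc s s) = tau lt x p" unfolding xb_def mt_nc p_def t(3) using s0 by simp
      show "mink_tau (nc s s) zb = tau lt p z" unfolding zb_def mt_nc tpz using s by simp
    qed
    have c1: "mink_tau yb (nc s s) \<le> tau lt y p"
      using cmp[OF tri1 m1 m2 m3, of y yb p "nc s s"] cy cp by blast
    have c2: "mink_tau (nc s s) wb \<le> tau lt p w"
      using cmp[OF tri2 m3 m5 m4, of p "nc s s" w wb] cp cw by blast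
    have e1: "mink_tau yb (nc s s) = sqrt ((s - u1) * (s - v1))" unfolding yb_def mt_nc using s uv1 by simp
    have e2: "mink_tau (nc s s) wb = sqrt ((u2 - s) * (v2 - s))" unfolding wb_def mt_nc using s uv2 by simp
    have "sqrt ((s - u1) * (s - v1)) > 0" using s uv1 by simp
    hence "0 < tau lt y p" using c1 e1 by linarith
    hence "ll y p" using ll_iff by blast
    hence lyp: "le y p" by (rule ll_le)
    have "le (ga t) (ga 1)" using geo_le[OF ga t(1) t(2) order_refl] .
    hence "le p z" using geo_ends[OF ga] unfolding p_def by simp
    hence lpw: "le p w" using le_trans' ll_le[OF zw] by blast
    have "tau lt y p + tau lt p w \<le> T" unfolding T_def by (rule rev_tri[OF lyp lpw])
    thus ?thesis using c1 c2 e1 e2 by simp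
  qed
  have "sqrt (u1 * v1) * sqrt ((u2 - L) * (v2 - L)) + sqrt (u2 * v2) * sqrt ((L - u1) * (L - v1)) \<le> L * T"
    by (rule ptolemy_real[OF uv1(1,2,3) uv2(1,2) H]) (use sa sb sd se Tbd eaT in auto)
  thus ?thesis using sa sb sd se unfolding a_def b_def d_def e_def L_def T_def by simp
qed


lemma general:
  assumes xy: "le x y" and yz: "le y z" and zw: "le z w"
  shows "tau lt x y * tau lt z w + tau lt x w * tau lt y z \<le> tau lt x z * tau lt y w"
proof (cases "tau lt y z = 0")
  case True
  have "tau lt x y \<le> tau lt x z" using rev_tri[OF xy yz] tau_nn[of y z] by linarith
  moreover have "tau lt z w \<le> tau lt y w" using rev_tri[OF yz zw] tau_nn[of y z] by linarith
  ultimately have "tau lt x y * tau lt z w \<le> tau lt x z * tau lt y w"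
    using tau_nn by (intro mult_mono) auto
  thus ?thesis using True by simp
next
  case False
  define b where "b = tau lt y z"
  have b0: "b > 0" using False tau_nn[of y z] unfolding b_def by linarith
  hence lyz: "ll y z" using ll_iff unfolding b_def by blast
  obtain g where g: "max_geodesic le lt g y z" using geo_exists lyz by blast
  have g0: "g 0 = y" and g1: "g 1 = z" using geo_ends[OF g] by auto
  have key: "tau lt x y * tau lt z w + tau lt x w * b - (2 * tau lt x w) * eps \<le> tau lt x z * tau lt y w"
    if eps: "0 < eps" "eps < b / 2" for eps
  proof -
    obtain t1 where t1: "0 \<le> t1" "t1 \<le> 1" "tau lt y (g t1) = eps"
      using geo_ivt[OF g, of eps] eps unfolding b_def by auto
    obtain t2 where t2: "0 \<le> t2" "t2 \<le> 1" "tau lt y (g t2) = b - eps"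
      using geo_ivt[OF g, of "b - eps"] eps unfolding b_def by auto
    have t12: "t1 \<le> t2"
    proof (rule ccontr)
      assume "\<not> t1 \<le> t2"
      hence "tau lt (g 0) (g t1) = tau lt (g 0) (g t2) + tau lt (g t2) (g t1)"
        using geo_add[OF g, of 0 t2 t1] t1 t2 by simp
      hence "eps \<ge> b - eps" using t1 t2 g0 tau_nn[of "g t2" "g t1"] by simp
      thus False using eps by simp
    qed
    define p q where "p = g t1" and "q = g t2"
    have "tau lt (g 0) (g t2) = tau lt (g 0) (g t1) + tau lt (g t1) (g t2)"
      using geo_add[OF g, of 0 t1 t2] t1 t2 t12 by simp
    hence tpq: "tau lt p q = b - 2 * eps" using t1 t2 g0 unfolding p_def q_def by simp
    have tqz: "tau lt q z = eps" using geo_split[OF g t2(1,2)] t2(3) unfolding q_def b_def by simp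
    have lyp: "le y p" using geo_le[OF g order_refl t1(1) t1(2)] g0 unfolding p_def by simp
    have lpq: "le p q" using geo_le[OF g t1(1) t12 t2(2)] unfolding p_def q_def by simp
    have lqz: "le q z" using geo_le[OF g t2(1) t2(2) order_refl] g1 unfolding q_def by simp
    have lxp: "le x p" using le_trans'[OF xy lyp] .
    have lyq: "le y q" using le_trans'[OF lyp lpq] .
    have lxq: "le x q" using le_trans'[OF xy lyq] .
    have lpw: "le p w" using le_trans'[OF lpq le_trans'[OF lqz zw]] .
    have r1: "tau lt x y + tau lt y p \<le> tau lt x p" by (rule rev_tri[OF xy lyp])
    have r2: "tau lt q z + tau lt z w \<le> tau lt q w" by (rule rev_tri[OF lqz zw])
    have r3: "tau lt x q + tau lt q z \<le> tau lt x z" by (rule rev_tri[OF lxq lqz])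
    have r4: "tau lt y p + tau lt p w \<le> tau lt y w" by (rule rev_tri[OF lyp lpw])
    have tYP: "tau lt y p = eps" using t1 unfolding p_def by simp
    have llxp: "ll x p" using r1 tYP eps tau_nn[of x y] ll_iff by (metis add_nonneg_pos order_less_le_trans)
    have llpq: "ll p q" using tpq eps ll_iff by simp
    have llqw: "ll q w" using r2 tqz eps tau_nn[of z w] ll_iff by (metis add_pos_nonneg order_less_le_trans)
    have C: "tau lt x p * tau lt q w + tau lt x w * tau lt p q \<le> tau lt x q * tau lt p w"
      by (rule core[OF llxp llpq llqw])
    have "tau lt x y * tau lt z w \<le> tau lt x p * tau lt q w"
      using r1 r2 tYP tqz eps tau_nn by (intro mult_mono) auto
    moreover have "tau lt x q * tau lt p w \<le> tau lt x z * tau lt y w"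
      using r3 r4 tYP tqz eps tau_nn by (intro mult_mono) auto
    moreover have "tau lt x w * tau lt p q = tau lt x w * b - (2 * tau lt x w) * eps"
      unfolding tpq by (simp add: algebra_simps)
    ultimately show ?thesis using C by linarith
  qed
  have "tau lt x y * tau lt z w + tau lt x w * b \<le> tau lt x z * tau lt y w"
  proof (rule ccontr)
    define A B K where "A = tau lt x y * tau lt z w + tau lt x w * b"
      and "B = tau lt x z * tau lt y w" and "K = 2 * tau lt x w"
    assume "\<not> tau lt x y * tau lt z w + tau lt x w * b \<le> tau lt x z * tau lt y w"
    hence AB: "A > B" unfolding A_def B_def by simp
    have K0: "K \<ge> 0" unfolding K_def using tau_nn by simp
    define eps where "eps = min (b / 4) ((A - B) / (2 * (K + 1)))"
    have e0: "eps > 0" unfolding eps_def using AB K0 b0 by simp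
    have e1: "eps < b / 2" unfolding eps_def using b0 by simp
    have "K * eps \<le> (K + 1) * eps" using e0 by simp
    also have "... \<le> (K + 1) * ((A - B) / (2 * (K + 1)))" unfolding eps_def using K0
      by (intro mult_left_mono) auto
    also have "... = (A - B) / 2" using K0 by (simp add: field_simps)
    finally have "K * eps < A - B" using AB by simp
    moreover have "A - K * eps \<le> B" using key[OF e0 e1] unfolding A_def B_def K_def by simp
    ultimately show False by simp
  qed
  thus ?thesis unfolding b_def .
qed

end

theorem proposition4p1:
  fixes le ll :: "'a::metric_space \<Rightarrow> 'a \<Rightarrow> bool" and lt :: "'a \<Rightarrow> 'a \<Rightarrow> ennreal"
  assumes "lorentzian_pre_length_space le ll lt"
    and "tl_curv_bounded_above_0 le ll lt"
  shows "\<forall>x y z w. le x y \<longrightarrow> le y z \<longrightarrow> le z w \<longrightarrow>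
           lt x y * lt z w + lt x w * lt y z \<le> lt x z * lt y w"
proof (intro allI impI)
  fix x y z w assume h: "le x y" "le y z" "le z w"
  note G = general[OF assms h]
  note E = lt_eq[OF assms]
  note N = tau_nn[OF assms]
  have M: "ennreal (tau lt a b * tau lt c d) = ennreal (tau lt a b) * ennreal (tau lt c d)" for a b c d
    using N by (simp add: ennreal_mult)
  have "lt x y * lt z w + lt x w * lt y z
      = ennreal (tau lt x y * tau lt z w + tau lt x w * tau lt y z)"
    unfolding E[of x y] E[of z w] E[of x w] E[of y z]
    using N by (simp add: mult_nonneg_nonneg M)
  also have "... \<le> ennreal (tau lt x z * tau lt y w)" using G by (rule ennreal_leI)
  also have "... = lt x z * lt y w" unfolding E[of x z] E[of y w] M ..
  finally show "lt x y * lt z w + lt x w * lt y z \<le> lt x z * lt y w" .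
qed

end
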